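(* Let $\mathcal X$ be a finite field, $A$ a full-rank $l\times n$ matrix over $\mathcal X$ (acting as $x\mapsto Ax$), and assume the index sets are ordered ($\mathcal I_1=\{1,\dots,l\}$, $\mathcal I_0=\{l+1,\dots,n\}$). Let $\Psi$ be the stochastic successive-cancellation (SSC) decoder. Then for every decoder $\phi:\mathcal X^l\times\mathcal Y^n\to\mathcal X^n$, $$\Pr\big(\Psi(A\mathbf X,\mathbf Y)\neq\mathbf X\big)\le 2\,\Pr\big(\phi(A\mathbf X,\mathbf Y)\neq\mathbf X\big),$$ where the left-hand probability is also over the internal randomness of $\Psi$. In particular, if $\Pr(\phi(A\mathbf X,\mathbf Y)\neq\mathbf X)=o(1)$, then $\Pr(\Psi(A\mathbf X,\mathbf Y)\neq\mathbf X)\to0$.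
   Context: $\mathcal Y$ is finite; $(\mathbf X,\mathbf Y)$ is a random pair on $\mathcal X^n\times\mathcal Y^n$. $B:\mathcal X^n\to\mathcal X^{n-l}$ is a map such that $T:\mathcal X^n\to\mathcal X^n$, $T(x)\equiv(Ax,Bx)$ (first the $l$ entries of $Ax$, then the $n-l$ entries of $Bx$), is a bijection. Notation: $c_i^j=(c_i,\dots,c_j)$. Extended codeword: $\mathbf C=(C_1,\dots,C_n)=T(\mathbf X)$. SSC decoder: given $(u,y)\in\mathcal X^l\times\mathcal Y^n$, set $\hat c_1^l=u$ and, for $i=l+1,\dots,n$ successively, draw $\hat c_i$ at random (independently of everything else given $\hat c_1^{i-1}$ and $y$) according to the conditional distribution $\mu_{C_i\mid C_1^{i-1}\mathbf Y}(\cdot\mid \hat c_1^{i-1},y)$ (with an arbitrary fixed distribution used when the conditioning event has probability zero). Then $\Psi(u,y)\equiv T^{-1}(\hat c)$. *)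

theory Defs
  imports "HOL-Probability.Probability"
begin

text \<open>Vectors in X^k are lists of length k (0-based indices).
  An l x n matrix over X is a function A :: nat => nat => 'f, used on i < l, j < n.\<close>

definition matvec :: "(nat \<Rightarrow> nat \<Rightarrow> 'f::field) \<Rightarrow> nat \<Rightarrow> nat \<Rightarrow> 'f list \<Rightarrow> 'f list" where
  "matvec A l n x = map (\<lambda>i. \<Sum>j<n. A i j * x ! j) [0..<l]"

definition full_rank :: "(nat \<Rightarrow> nat \<Rightarrow> 'f::field) \<Rightarrow> nat \<Rightarrow> nat \<Rightarrow> bool" where
  "full_rank A l n \<longleftrightarrow>
     (\<forall>c::nat \<Rightarrow> 'f. (\<forall>j<n. (\<Sum>i<l. c i * A i j) = 0) \<longrightarrow> (\<forall>i<l. c i = 0))"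

definition Tmap :: "(nat \<Rightarrow> nat \<Rightarrow> 'f::field) \<Rightarrow> nat \<Rightarrow> nat \<Rightarrow> ('f list \<Rightarrow> 'f list) \<Rightarrow> 'f list \<Rightarrow> 'f list" where
  "Tmap A l n B x = matvec A l n x @ B x"

definition CY_pmf :: "('f list \<Rightarrow> 'f list) \<Rightarrow> ('f list \<times> 'y list) pmf \<Rightarrow> ('f list \<times> 'y list) pmf" where
  "CY_pmf T P = map_pmf (\<lambda>(x, y). (T x, y)) P"

text \<open>Conditional law of C_{i+1} (0-based: C ! i) given C_1^i = pre and Y = y,
  where i = length pre; the fixed default distribution d is used when the
  conditioning event has probability zero.\<close>
definition cond_next ::
  "('f list \<times> 'y list) pmf \<Rightarrow> ('f list \<Rightarrow> 'y list \<Rightarrow> 'f pmf) \<Rightarrow> 'f list \<Rightarrow> 'y list \<Rightarrow> 'f pmf" where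
  "cond_next Q d pre y =
     (let S = {(c, y'). take (length pre) c = pre \<and> y' = y} in
      if set_pmf Q \<inter> S \<noteq> {} then map_pmf (\<lambda>(c, y'). c ! length pre) (cond_pmf Q S)
      else d pre y)"

fun ssc_extend ::
  "('f list \<times> 'y list) pmf \<Rightarrow> ('f list \<Rightarrow> 'y list \<Rightarrow> 'f pmf) \<Rightarrow> 'y list \<Rightarrow> nat \<Rightarrow> 'f list \<Rightarrow> 'f list pmf" where
  "ssc_extend Q d y 0 pre = return_pmf pre"
| "ssc_extend Q d y (Suc k) pre =
     bind_pmf (cond_next Q d pre y) (\<lambda>c. ssc_extend Q d y k (pre @ [c]))"

definition ssc_decoder ::
  "(nat \<Rightarrow> nat \<Rightarrow> 'f::field) \<Rightarrow> nat \<Rightarrow> nat \<Rightarrow> ('f list \<Rightarrow> 'f list) \<Rightarrow> ('f list \<times> 'y list) pmf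
   \<Rightarrow> ('f list \<Rightarrow> 'y list \<Rightarrow> 'f pmf) \<Rightarrow> 'f list \<Rightarrow> 'y list \<Rightarrow> 'f list pmf" where
  "ssc_decoder A l n B P d u y =
     map_pmf (the_inv_into {x. length x = n} (Tmap A l n B))
       (ssc_extend (CY_pmf (Tmap A l n B) P) d y (n - l) u)"

definition ssc_error :: 
  "(nat \<Rightarrow> nat \<Rightarrow> 'f::field) \<Rightarrow> nat \<Rightarrow> nat \<Rightarrow> ('f list \<Rightarrow> 'f list) \<Rightarrow> ('f list \<times> 'y list) pmf
   \<Rightarrow> ('f list \<Rightarrow> 'y list \<Rightarrow> 'f pmf) \<Rightarrow> real" where
  "ssc_error A l n B P d =
     measure_pmf.prob
       (bind_pmf P (\<lambda>(x, y). map_pmf (\<lambda>xh. (x, xh)) (ssc_decoder A l n B P d (matvec A l n x) y)))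
       {(x, xh). xh \<noteq> x}"

end

theory Submission
  imports Defs
begin

lemma measure_cond_pmf:
  assumes "set_pmf p \<inter> S \<noteq> {}"
  shows "measure_pmf.prob (cond_pmf p S) U = measure_pmf.prob p (S \<inter> U) / measure_pmf.prob p S"
proof -
  have "measure_pmf (cond_pmf p S) = uniform_measure (measure_pmf p) S"
    using cond_pmf.rep_eq[OF assms] .
  then show ?thesis
    apply simp
    apply (rule measure_uniform_measure)
    using emeasure_measure_pmf_not_zero[OF assms] by (auto simp: measure_pmf.emeasure_finite)
qed

lemma pos_of_ne: "set_pmf p \<inter> S \<noteq> {} \<Longrightarrow> measure_pmf.prob p S > 0"
proof -
  assume "set_pmf p \<inter> S \<noteq> {}"
  then obtain x where "x \<in> set_pmf p" "x \<in> S" by blast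
  then show ?thesis by (rule measure_pmf_posI)
qed

lemma cond_cond_pmf:
  assumes "set_pmf p \<inter> (S \<inter> U) \<noteq> {}"
  shows "cond_pmf (cond_pmf p S) U = cond_pmf p (S \<inter> U)"
proof (rule pmf_eqI)
  fix x
  have a: "set_pmf p \<inter> S \<noteq> {}" using assms by blast
  have b: "set_pmf (cond_pmf p S) \<inter> U \<noteq> {}" using assms set_cond_pmf[OF a] by blast
  have pos: "measure_pmf.prob p S > 0" using a by (rule pos_of_ne)
  have pos2: "measure_pmf.prob p (S \<inter> U) > 0" using assms by (rule pos_of_ne)
  have m: "measure_pmf.prob (cond_pmf p S) U = measure_pmf.prob p (S \<inter> U) / measure_pmf.prob p S"
    by (rule measure_cond_pmf[OF a])
  show "pmf (cond_pmf (cond_pmf p S) U) x = pmf (cond_pmf p (S \<inter> U)) x"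
    unfolding pmf_cond[OF b] pmf_cond[OF assms] pmf_cond[OF a] m
    using pos pos2 by simp
qed

lemma cond_pmf_cong_set:
  assumes "set_pmf p \<inter> S = set_pmf p \<inter> S'" "set_pmf p \<inter> S \<noteq> {}"
  shows "cond_pmf p S = cond_pmf p S'"
proof -
  have z1: "\<And>x. x \<in> S \<Longrightarrow> x \<notin> S' \<Longrightarrow> pmf p x = 0"
    using assms(1) by (metis IntD2 IntI pmf_eq_0_set_pmf)
  have z2: "\<And>x. x \<in> S' \<Longrightarrow> x \<notin> S \<Longrightarrow> pmf p x = 0"
    using assms(1) by (metis IntD2 IntI pmf_eq_0_set_pmf)
  have m: "measure_pmf.prob p S = measure_pmf.prob p S'"
    by (rule measure_prob_cong_0) (use z1 z2 in auto)
  show ?thesis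
    using assms m z1 z2 by (intro pmf_eqI) (auto simp: pmf_cond)
qed

lemma ssc_extend_eq:
  assumes len: "\<forall>(c,y')\<in>set_pmf Q. length c = n"
  shows "set_pmf Q \<inter> {(c,y'). take (length pre) c = pre \<and> y' = y} \<noteq> {} \<Longrightarrow> length pre + k \<le> n \<Longrightarrow>
    ssc_extend Q d y k pre = map_pmf (\<lambda>(c,y'). take (length pre + k) c)
       (cond_pmf Q {(c,y'). take (length pre) c = pre \<and> y' = y})"
proof (induction k arbitrary: pre)
  case 0
  define S where "S = {(c,y'). take (length pre) c = pre \<and> y' = y}"
  have "map_pmf (\<lambda>(c,y'). take (length pre + 0) c) (cond_pmf Q S) = map_pmf (\<lambda>_. pre) (cond_pmf Q S)"
    by (rule map_pmf_cong) (use 0 in \<open>auto simp: S_def\<close>)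
  then show ?case by (simp add: S_def)
next
  case (Suc k)
  define S where "S = {(c,y'). take (length pre) c = pre \<and> y' = y}"
  define R where "R = cond_pmf Q S"
  define g where "g = (\<lambda>b::'a list \<times> 'b list. fst b ! length pre)"
  define t where "t = (\<lambda>b::'a list \<times> 'b list. take (length pre + Suc k) (fst b))"
  have ne: "set_pmf Q \<inter> S \<noteq> {}" using Suc.prems S_def by simp
  have cn: "cond_next Q d pre y = map_pmf g R"
    using ne by (simp add: cond_next_def Let_def S_def R_def g_def split_beta')
  have key: "take (Suc (length pre)) c = pre @ [a] \<longleftrightarrow> take (length pre) c = pre \<and> c ! length pre = a"
    if "length c = n" for c :: "'a list" and a
  proof -
    have "length pre < length c" using that Suc.prems(2) by simp
    then have "take (Suc (length pre)) c = take (length pre) c @ [c ! length pre]"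
      by (simp add: take_Suc_conv_app_nth)
    then show ?thesis by simp
  qed
  have step: "ssc_extend Q d y k (pre @ [a]) = map_pmf t (cond_pmf R {b. g b = a})"
    if a: "a \<in> set_pmf (map_pmf g R)" for a
  proof -
    obtain c y' where b: "(c,y') \<in> set_pmf R" "g (c,y') = a" using a by auto
    have bq: "(c,y') \<in> set_pmf Q" "take (length pre) c = pre" "y' = y" "length c = n"
      using b ne len by (auto simp: R_def S_def)
    have cb: "c ! length pre = a" using b by (simp add: g_def)
    define S' where "S' = {(c,y'). take (length (pre @ [a])) c = pre @ [a] \<and> y' = y}"
    have ne': "set_pmf Q \<inter> S' \<noteq> {}"
      using bq cb key[of c a] by (auto simp: S'_def)
    have IH: "ssc_extend Q d y k (pre @ [a]) =
        map_pmf (\<lambda>(c,y'). take (length (pre @ [a]) + k) c) (cond_pmf Q S')"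
      using Suc.IH[of "pre @ [a]"] ne' Suc.prems(2) by (simp add: S'_def)
    have ne2: "set_pmf Q \<inter> (S \<inter> {b. g b = a}) \<noteq> {}"
      using bq cb by (auto simp: S_def g_def)
    have "cond_pmf R {b. g b = a} = cond_pmf Q (S \<inter> {b. g b = a})"
      unfolding R_def by (rule cond_cond_pmf[OF ne2])
    also have "\<dots> = cond_pmf Q S'"
    proof (rule cond_pmf_cong_set[OF _ ne2])
      show "set_pmf Q \<inter> (S \<inter> {b. g b = a}) = set_pmf Q \<inter> S'"
        using len key by (fastforce simp: S_def S'_def g_def)
    qed
    finally show ?thesis using IH by (simp add: t_def split_beta')
  qed
  have "ssc_extend Q d y (Suc k) pre = bind_pmf (map_pmf g R) (\<lambda>a. ssc_extend Q d y k (pre @ [a]))"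
    using cn by simp
  also have "\<dots> = bind_pmf (map_pmf g R) (\<lambda>a. map_pmf t (cond_pmf R {b. g b = a}))"
    by (rule bind_pmf_cong) (use step in auto)
  also have "\<dots> = map_pmf t (bind_pmf (map_pmf g R) (\<lambda>a. cond_pmf R {b. g b = a}))"
    by (simp add: map_bind_pmf)
  also have "bind_pmf (map_pmf g R) (\<lambda>a. cond_pmf R {b. g b = a}) = R"
  proof (rule bind_cond_pmf_cancel)
    show "\<And>x. x \<in> set_pmf (map_pmf g R) \<Longrightarrow> set_pmf R \<inter> {y. g y = x} \<noteq> {}" by auto
    show "\<And>y. y \<in> set_pmf R \<Longrightarrow> set_pmf (map_pmf g R) \<inter> {x. g y = x} \<noteq> {}" by auto
    show "\<And>x y. x \<in> set_pmf (map_pmf g R) \<Longrightarrow> y \<in> set_pmf R \<Longrightarrow> g y = x \<Longrightarrow>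
        measure_pmf.prob R {y. g y = x} = measure_pmf.prob (map_pmf g R) {x. g y = x}"
      by (auto simp: vimage_def eq_commute)
  qed
  finally show ?case by (simp add: t_def S_def R_def split_beta')
qed

theorem theorem3:
  fixes A :: "nat \<Rightarrow> nat \<Rightarrow> 'f::{field, finite}"
    and l n :: nat
    and B :: "'f list \<Rightarrow> 'f list"
    and P :: "('f list \<times> 'y::finite list) pmf"
    and d :: "'f list \<Rightarrow> 'y list \<Rightarrow> 'f pmf"
    and phi :: "'f list \<Rightarrow> 'y list \<Rightarrow> 'f list"
  assumes "full_rank A l n"
    and "bij_betw (Tmap A l n B) {x. length x = n} {c. length c = n}"
    and "\<forall>(x, y) \<in> set_pmf P. length x = n \<and> length y = n"
  shows "ssc_error A l n B P d
           \<le> 2 * measure_pmf.prob P {(x, y). phi (matvec A l n x) y \<noteq> x}"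
proof -
  define T where "T = Tmap A l n B"
  define Ti where "Ti = the_inv_into {x. length x = n} T"
  define Q where "Q = CY_pmf T P"
  define \<kappa> where "\<kappa> = (\<lambda>b::'f list \<times> 'y list. (take l (fst b), snd b))"
  define K where "K = (\<lambda>a. cond_pmf Q {b. \<kappa> b = \<kappa> a})"
  define mv where "mv = matvec A l n"
  have bij: "bij_betw T {x. length x = n} {c. length c = n}" using assms(2) T_def by simp
  have lenT: "length (T x) = n" if "length x = n" for x
    using bij_betw_apply[OF bij] that by auto
  have TiT: "Ti (T x) = x" if "length x = n" for x
    using bij that unfolding Ti_def by (simp add: bij_betw_def the_inv_into_f_f)
  have lenmv: "length (mv x) = l" for x by (simp add: mv_def matvec_def)
  have takeT: "take l (T x) = mv x" for x
    using lenmv[of x] by (simp add: T_def Tmap_def mv_def)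
  have ln: "l \<le> n" using lenT[of "replicate n 0"] lenmv by (simp add: T_def Tmap_def mv_def)
  have setQ: "\<exists>x. (x,y) \<in> set_pmf P \<and> c = T x \<and> length x = n" if "(c,y) \<in> set_pmf Q" for c y
    using that assms(3) by (auto simp: Q_def CY_pmf_def)
  have lenQ: "\<forall>(c,y')\<in>set_pmf Q. length c = n" using setQ lenT by blast
  have TQ: "(T x, y) \<in> set_pmf Q" if "(x,y) \<in> set_pmf P" for x y
    using that unfolding Q_def CY_pmf_def set_map_pmf by (rule rev_image_eqI) simp
  have dec: "ssc_decoder A l n B P d (mv x) y = map_pmf (\<lambda>b. Ti (fst b)) (K (T x, y))"
    if xy: "(x,y) \<in> set_pmf P" for x y
  proof -
    define S where "S = {(c,y'). take (length (mv x)) c = mv x \<and> y' = y}"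
    have Seq: "S = {b. \<kappa> b = \<kappa> (T x, y)}" by (auto simp: S_def \<kappa>_def lenmv takeT)
    have ne: "set_pmf Q \<inter> S \<noteq> {}" using TQ[OF xy] Seq by auto
    have "ssc_extend Q d y (n - l) (mv x) =
        map_pmf (\<lambda>(c,y'). take (length (mv x) + (n-l)) c) (cond_pmf Q S)"
    proof -
      have lk: "length (mv x) + (n - l) \<le> n" using ln by (simp add: lenmv)
      show ?thesis unfolding S_def by (rule ssc_extend_eq[OF lenQ ne[unfolded S_def] lk])
    qed
    also have "\<dots> = map_pmf fst (K (T x, y))"
      unfolding K_def Seq[symmetric]
    proof (rule map_pmf_cong)
      fix b assume "b \<in> set_pmf (cond_pmf Q S)"
      then have "b \<in> set_pmf Q" using ne by simp
      then have "length (fst b) = n" using lenQ by auto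
      then show "(\<lambda>(c,y'). take (length (mv x) + (n-l)) c) b = fst b"
        using ln by (simp add: lenmv split_beta)
    qed simp
    finally show ?thesis
      unfolding ssc_decoder_def T_def[symmetric] Q_def[symmetric] Ti_def[symmetric] mv_def[symmetric]
      by (simp add: map_pmf_comp)
  qed
  define J where "J = bind_pmf P (\<lambda>a. map_pmf (\<lambda>b. (a,b)) (K (T (fst a), snd a)))"
  have "bind_pmf P (\<lambda>(x, y). map_pmf (\<lambda>xh. (x, xh)) (ssc_decoder A l n B P d (matvec A l n x) y))
     = map_pmf (\<lambda>ab. (fst (fst ab), Ti (fst (snd ab)))) J"
    unfolding J_def map_bind_pmf mv_def[symmetric]
    by (rule bind_pmf_cong) (auto simp: dec map_pmf_comp)
  then have err: "ssc_error A l n B P d = measure_pmf.prob J {ab. Ti (fst (snd ab)) \<noteq> fst (fst ab)}"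
    by (simp add: ssc_error_def vimage_def split_beta')
  have fstJ: "map_pmf fst J = P"
    unfolding J_def map_bind_pmf by (simp add: map_pmf_comp bind_return_pmf')
  have "map_pmf snd J = bind_pmf P (\<lambda>a. K (T (fst a), snd a))"
    unfolding J_def map_bind_pmf by (simp add: map_pmf_comp)
  also have "\<dots> = bind_pmf Q K"
    by (simp add: Q_def CY_pmf_def bind_map_pmf split_beta')
  also have "bind_pmf Q K = Q"
    unfolding K_def
  proof (rule bind_cond_pmf_cancel)
    show "\<And>x. x \<in> set_pmf Q \<Longrightarrow> set_pmf Q \<inter> {y. \<kappa> y = \<kappa> x} \<noteq> {}" by auto
    show "\<And>y. y \<in> set_pmf Q \<Longrightarrow> set_pmf Q \<inter> {x. \<kappa> y = \<kappa> x} \<noteq> {}" by auto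
    show "\<And>x y. x \<in> set_pmf Q \<Longrightarrow> y \<in> set_pmf Q \<Longrightarrow> \<kappa> y = \<kappa> x \<Longrightarrow>
        measure_pmf.prob Q {y. \<kappa> y = \<kappa> x} = measure_pmf.prob Q {x. \<kappa> y = \<kappa> x}"
      by (rule arg_cong[where f="measure_pmf.prob Q"]) auto
  qed
  finally have sndJ: "map_pmf snd J = Q" .
  define F where "F = {(x, y). phi (matvec A l n x) y \<noteq> x}"
  define G where "G = {(c, y'). phi (mv (Ti c)) y' \<noteq> Ti c}"
  define E where "E = {ab::('f list \<times> 'y list) \<times> ('f list \<times> 'y list). Ti (fst (snd ab)) \<noteq> fst (fst ab)}"
  have suppJ: "a \<in> set_pmf P \<and> b \<in> set_pmf Q \<and> \<kappa> b = \<kappa> (T (fst a), snd a)"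
    if "(a,b) \<in> set_pmf J" for a b
  proof -
    have aP: "a \<in> set_pmf P" and bK: "b \<in> set_pmf (K (T (fst a), snd a))"
      using that by (auto simp: J_def)
    have ne: "set_pmf Q \<inter> {b. \<kappa> b = \<kappa> (T (fst a), snd a)} \<noteq> {}"
      using TQ[of "fst a" "snd a"] aP by auto
    show ?thesis using aP bK ne by (simp add: K_def)
  qed
  have sub: "E \<inter> set_pmf J \<subseteq> fst -` F \<union> snd -` G"
  proof
    fix ab assume ab: "ab \<in> E \<inter> set_pmf J"
    obtain x y c y' where abeq: "ab = ((x,y),(c,y'))" by (metis prod.collapse)
    have s: "(x,y) \<in> set_pmf P" "(c,y') \<in> set_pmf Q" "\<kappa> (c,y') = \<kappa> (T x, y)"
      using suppJ[of "(x,y)" "(c,y')"] ab abeq by auto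
    have lx: "length x = n" using s(1) assms(3) by auto
    obtain x' where x': "(x',y') \<in> set_pmf P" "c = T x'" "length x' = n" using setQ[OF s(2)] by blast
    have Tic: "Ti c = x'" using x' TiT by simp
    have yy: "y' = y" and mvx: "mv x' = mv x"
      using s(3) x'(2) takeT by (auto simp: \<kappa>_def)
    have "x' \<noteq> x" using ab abeq Tic by (simp add: E_def)
    then show "ab \<in> fst -` F \<union> snd -` G"
      using abeq Tic yy mvx by (auto simp: F_def G_def mv_def)
  qed
  have "measure_pmf.prob J E = measure_pmf.prob J (E \<inter> set_pmf J)"
    by (simp add: measure_Int_set_pmf)
  also have "\<dots> \<le> measure_pmf.prob J (fst -` F \<union> snd -` G)"
    by (rule measure_pmf.finite_measure_mono[OF sub]) simp
  also have "\<dots> \<le> measure_pmf.prob J (fst -` F) + measure_pmf.prob J (snd -` G)"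
    by (rule measure_Un_le) simp_all
  also have "measure_pmf.prob J (fst -` F) = measure_pmf.prob P F"
    by (simp flip: fstJ)
  also have "measure_pmf.prob J (snd -` G) = measure_pmf.prob Q G"
    by (simp flip: sndJ)
  also have "measure_pmf.prob Q G = measure_pmf.prob P ((\<lambda>(x,y). (T x, y)) -` G)"
    by (simp add: Q_def CY_pmf_def)
  also have "\<dots> = measure_pmf.prob P F"
  proof -
    have "(\<lambda>(x,y). (T x, y)) -` G \<inter> set_pmf P = F \<inter> set_pmf P"
      using assms(3) TiT by (auto simp: G_def F_def mv_def)
    then show ?thesis by (metis measure_Int_set_pmf)
  qed
  finally show ?thesis using err by (simp add: E_def F_def)
qed

end
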